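(* For every integer $n\ge 1$, $\gamma^{DLD}(P_n\square P_2)=n$.
   Context: $P_k$ denotes the path on $k$ vertices. The Cartesian product $G\square H$ has vertex set $V(G)\times V(H)$, with $(u,v)$ adjacent to $(u',v')$ iff either $u=u'$ and $vv'\in E(H)$, or $uu'\in E(G)$ and $v=v'$. For a vertex $u$, $N[u]$ is its closed neighbourhood. A code is a non-empty subset $C$ of the vertex set $V$; $I(C;u)=N[u]\cap C$. A code $C$ is solid-locating-dominating if $I(C;u)\ne\emptyset$ for every $u\in V\setminus C$ and $I(C;u)\not\subseteq I(C;v)$ for all distinct $u,v\in V\setminus C$; $\gamma^{DLD}$ is the minimum size of such a code. *)

theory Defs
  imports Main
begin

definition path_verts :: "nat \<Rightarrow> nat set" where
  "path_verts k = {0..<k}"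

definition path_adj :: "nat \<Rightarrow> nat \<Rightarrow> bool" where
  "path_adj u v \<longleftrightarrow> u = Suc v \<or> v = Suc u"

definition cart_adj :: "('a \<Rightarrow> 'a \<Rightarrow> bool) \<Rightarrow> ('b \<Rightarrow> 'b \<Rightarrow> bool)
    \<Rightarrow> 'a \<times> 'b \<Rightarrow> 'a \<times> 'b \<Rightarrow> bool" where
  "cart_adj EG EH x y \<longleftrightarrow>
     (fst x = fst y \<and> EH (snd x) (snd y)) \<or> (EG (fst x) (fst y) \<and> snd x = snd y)"

definition closed_nbhd :: "'v set \<Rightarrow> ('v \<Rightarrow> 'v \<Rightarrow> bool) \<Rightarrow> 'v \<Rightarrow> 'v set" where
  "closed_nbhd V E u = {v \<in> V. v = u \<or> E u v}"

definition I_code :: "'v set \<Rightarrow> ('v \<Rightarrow> 'v \<Rightarrow> bool) \<Rightarrow> 'v set \<Rightarrow> 'v \<Rightarrow> 'v set" where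
  "I_code V E C u = closed_nbhd V E u \<inter> C"

definition is_solid_LD :: "'v set \<Rightarrow> ('v \<Rightarrow> 'v \<Rightarrow> bool) \<Rightarrow> 'v set \<Rightarrow> bool" where
  "is_solid_LD V E C \<longleftrightarrow> C \<noteq> {} \<and> C \<subseteq> V \<and>
     (\<forall>u \<in> V - C. I_code V E C u \<noteq> {}) \<and>
     (\<forall>u \<in> V - C. \<forall>v \<in> V - C. u \<noteq> v \<longrightarrow> \<not> I_code V E C u \<subseteq> I_code V E C v)"

definition gamma_DLD :: "'v set \<Rightarrow> ('v \<Rightarrow> 'v \<Rightarrow> bool) \<Rightarrow> nat" where
  "gamma_DLD V E = (LEAST k. \<exists>C. is_solid_LD V E C \<and> card C = k)"

end

theory Submission
  imports Defs
begin

definition ladj :: "nat \<Rightarrow> nat \<Rightarrow> nat \<Rightarrow> nat \<Rightarrow> bool" where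
  "ladj a b x y \<longleftrightarrow> (x = a \<and> (y = Suc b \<or> b = Suc y)) \<or> ((x = Suc a \<or> a = Suc x) \<and> y = b)"

lemma nbhd_iff:
  "(x,y) \<in> closed_nbhd (path_verts n \<times> path_verts 2) (cart_adj path_adj path_adj) (a,b)
   \<longleftrightarrow> x < n \<and> y < 2 \<and> ((x,y) = (a,b) \<or> ladj a b x y)"
  by (auto simp: closed_nbhd_def cart_adj_def path_adj_def path_verts_def ladj_def)

lemma lower:
  fixes n :: nat and C :: "(nat \<times> nat) set"
  assumes S: "is_solid_LD (path_verts n \<times> path_verts 2) (cart_adj path_adj path_adj) C"
  shows "n \<le> card C"
proof -
  define V where "V = path_verts n \<times> path_verts 2"
  define E where "E = cart_adj path_adj path_adj"
  have CV: "C \<subseteq> V" using S by (simp add: is_solid_LD_def V_def)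
  have Cn: "\<And>x y. (x,y)\<in>C \<Longrightarrow> x<n \<and> y<2" using CV by (auto simp: V_def path_verts_def)
  have Cn2: "\<And>x y. (x, Suc (Suc y)) \<notin> C" using Cn by fastforce
  have finV: "finite V" by (simp add: V_def path_verts_def)
  have finC: "finite C" using CV finV finite_subset by blast
  have A: "\<And>a b. a<n \<Longrightarrow> b<2 \<Longrightarrow> (a,b)\<notin>C \<Longrightarrow> \<exists>x y. (x,y)\<in>C \<and> ladj a b x y"
  proof -
    fix a b assume h: "a<n" "b<2" "(a,b)\<notin>C"
    then have "(a,b) \<in> V - C" by (simp add: V_def path_verts_def)
    then have "I_code V E C (a,b) \<noteq> {}" using S by (simp add: is_solid_LD_def V_def E_def)
    then obtain x y where "(x,y) \<in> closed_nbhd V E (a,b)" "(x,y)\<in>C"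
      unfolding I_code_def by auto
    then show "\<exists>x y. (x,y)\<in>C \<and> ladj a b x y" using h(3)
      by (auto simp: V_def E_def nbhd_iff)
  qed
  have B: "\<And>a b a' b'. a<n \<Longrightarrow> b<2 \<Longrightarrow> (a,b)\<notin>C \<Longrightarrow> a'<n \<Longrightarrow> b'<2 \<Longrightarrow> (a',b')\<notin>C
      \<Longrightarrow> (a,b)\<noteq>(a',b') \<Longrightarrow> \<exists>x y. (x,y)\<in>C \<and> ladj a b x y \<and> \<not> ladj a' b' x y"
  proof -
    fix a b a' b' assume h: "a<n" "b<2" "(a,b)\<notin>C" "a'<n" "b'<2" "(a',b')\<notin>C" "(a,b)\<noteq>(a',b')"
    then have "(a,b) \<in> V - C" "(a',b') \<in> V - C" by (simp_all add: V_def path_verts_def)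
    then have "\<not> I_code V E C (a,b) \<subseteq> I_code V E C (a',b')" using S h(7)
      by (simp add: is_solid_LD_def V_def E_def)
    then obtain x y where "(x,y) \<in> closed_nbhd V E (a,b)" "(x,y)\<in>C"
       "(x,y) \<notin> closed_nbhd V E (a',b')"
      unfolding I_code_def by auto
    then show "\<exists>x y. (x,y)\<in>C \<and> ladj a b x y \<and> \<not> ladj a' b' x y" using h(3)
      by (auto simp: V_def E_def nbhd_iff dest: Cn)
  qed
  define full where "full i \<longleftrightarrow> (i,0)\<in>C \<and> (i,Suc 0)\<in>C" for i
  have C1: "\<And>i. i<n \<Longrightarrow> (i,0)\<notin>C \<Longrightarrow> (i,1)\<notin>C \<Longrightarrow> full (Suc i) \<or> (\<exists>x. i = Suc x \<and> full x)"
  proof -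
    fix i assume h: "i<n" "(i,0)\<notin>C" "(i,1)\<notin>C"
    show "full (Suc i) \<or> (\<exists>x. i = Suc x \<and> full x)"
    proof (cases i)
      case 0
      have "(Suc 0, 0) \<in> C" using A[of 0 0] h 0 Cn Cn2 by (auto simp: ladj_def)
      moreover have "(Suc 0, 1) \<in> C" using A[of 0 1] h 0 Cn Cn2 by (auto simp: ladj_def)
      ultimately show ?thesis using 0 by (simp add: full_def)
    next
      case (Suc x)
      have A0: "(x,0)\<in>C \<or> (Suc i,0)\<in>C" using A[of i 0] h Suc Cn Cn2 by (auto simp: ladj_def)
      have A1: "(x,1)\<in>C \<or> (Suc i,1)\<in>C" using A[of i 1] h Suc Cn Cn2 by (auto simp: ladj_def)
      have B1: "(x,1)\<notin>C \<Longrightarrow> (Suc i,0)\<in>C" using B[of i 0 x 1] h Suc Cn Cn2 by (auto simp: ladj_def)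
      have B2: "(x,0)\<notin>C \<Longrightarrow> (Suc i,1)\<in>C" using B[of i 1 x 0] h Suc Cn Cn2 by (auto simp: ladj_def)
      show ?thesis using A0 A1 B1 B2 Suc by (auto simp: full_def)
    qed
  qed
  have C2: "\<And>a. Suc (Suc a) < n \<Longrightarrow> (Suc (Suc a),0)\<notin>C \<Longrightarrow> (Suc (Suc a),1)\<notin>C \<Longrightarrow>
       (a,0)\<notin>C \<Longrightarrow> (a,1)\<notin>C \<Longrightarrow> full (Suc a) \<Longrightarrow> full (Suc (Suc (Suc a)))"
  proof -
    fix a assume h: "Suc (Suc a) < n" "(Suc (Suc a),0)\<notin>C" "(Suc (Suc a),1)\<notin>C"
       "(a,0)\<notin>C" "(a,1)\<notin>C" "full (Suc a)"
    have "(Suc (Suc (Suc a)),0)\<in>C" using B[of "Suc (Suc a)" 0 a 0] h Cn Cn2 by (auto simp: ladj_def)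
    moreover have "(Suc (Suc (Suc a)),1)\<in>C" using B[of "Suc (Suc a)" 1 a 1] h Cn Cn2 by (auto simp: ladj_def)
    ultimately show "full (Suc (Suc (Suc a)))" by (simp add: full_def)
  qed
  define f where "f i = (if full (Suc i) then Suc i else i - 1)" for i
  define g where "g u = (if (fst u, 1 - snd u) \<in> C then (fst u, 1 - snd u) else (f (fst u), snd u))" for u
  have femp: "\<And>a. a<n \<Longrightarrow> (a,0)\<notin>C \<Longrightarrow> (a,1)\<notin>C \<Longrightarrow> full (f a) \<and>
      ((f a = Suc a) \<or> (\<not> full (Suc a) \<and> Suc (f a) = a))"
  proof -
    fix a assume h: "a<n" "(a,0)\<notin>C" "(a,1)\<notin>C"
    show "full (f a) \<and> ((f a = Suc a) \<or> (\<not> full (Suc a) \<and> Suc (f a) = a))"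
      using C1[OF h] by (auto simp: f_def)
  qed
  have gC: "g ` (V - C) \<subseteq> C"
  proof
    fix z assume "z \<in> g ` (V - C)"
    then obtain a b where z: "z = g (a,b)" "(a,b) \<in> V" "(a,b)\<notin>C" by auto
    then have ab: "a<n" "b<2" by (auto simp: V_def path_verts_def)
    show "z \<in> C"
    proof (cases "(a, 1 - b) \<in> C")
      case True then show ?thesis using z by (simp add: g_def)
    next
      case False
      then have "(a,0)\<notin>C" "(a,1)\<notin>C" using z(3) ab by (cases b; auto)+
      then have "full (f a)" using femp ab by blast
      then show ?thesis using z False ab by (cases b) (auto simp: g_def full_def)
    qed
  qed
  have ginj: "inj_on g (V - C)"
  proof (rule inj_onI)
    fix u v assume u: "u \<in> V - C" and v: "v \<in> V - C" and e: "g u = g v"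
    obtain a b where ab: "u = (a,b)" by (cases u)
    obtain a' b' where ab': "v = (a',b')" by (cases v)
    have r: "a<n" "b<2" "(a,b)\<notin>C" "a'<n" "b'<2" "(a',b')\<notin>C"
      using u v ab ab' by (auto simp: V_def path_verts_def)
    show "u = v"
    proof (cases "(a, 1 - b) \<in> C")
      case T1: True
      show ?thesis
      proof (cases "(a', 1 - b') \<in> C")
        case True then show ?thesis using T1 e ab ab' r by (auto simp: g_def)
      next
        case False
        then have "(a',0)\<notin>C" "(a',1)\<notin>C" using r by (cases b'; auto)+
        then have "full (f a')" using femp r by blast
        then show ?thesis using T1 False e ab ab' r by (cases b; cases b') (auto simp: g_def full_def)
      qed
    next
      case F1: False
      then have e1: "(a,0)\<notin>C" "(a,1)\<notin>C" using r by (cases b; auto)+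
      then have fa: "full (f a)" using femp r by blast
      show ?thesis
      proof (cases "(a', 1 - b') \<in> C")
        case True then show ?thesis using fa F1 e ab ab' r by (cases b; cases b') (auto simp: g_def full_def)
      next
        case False
        then have e2: "(a',0)\<notin>C" "(a',1)\<notin>C" using r by (cases b'; auto)+
        have eq: "f a = f a'" "b = b'" using e F1 False ab ab' by (auto simp: g_def)
        have fa1: "(f a = Suc a) \<or> (\<not> full (Suc a) \<and> Suc (f a) = a)" using femp r e1 by blast
        have fa2: "(f a' = Suc a') \<or> (\<not> full (Suc a') \<and> Suc (f a') = a')" using femp r e2 by blast
        have fs: "full (f a)" "full (f a')" using femp r e1 e2 by blast+
        have "a = a'"
        proof (rule ccontr)
          assume ne: "a \<noteq> a'"
          show False
          proof (cases "f a = Suc a")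
            case True
            then have "\<not> full (Suc a') \<and> a' = Suc (Suc a)" using fa2 eq ne by auto
            then show False using C2[of a] r e1 e2 fs True eq by auto
          next
            case False
            then have "\<not> full (Suc a) \<and> Suc (f a) = a" using fa1 by auto
            then have "a = Suc (Suc a')" using fa2 eq ne by auto
            then show False using C2[of a'] r e1 e2 fs fa1 fa2 eq False by auto
          qed
        qed
        then show ?thesis using ab ab' eq by simp
      qed
    qed
  qed
  have "card (V - C) \<le> card C" using card_inj_on_le[OF ginj gC finC] .
  moreover have "card V = card C + card (V - C)"
    using card_Diff_subset[OF finite_subset[OF CV finV] CV] card_mono[OF finV CV] by simp
  moreover have "card V = 2 * n" by (simp add: V_def path_verts_def card_cartesian_product)
  ultimately show ?thesis by simp
qed

lemma I_up: assumes "a < n"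
  shows "I_code (path_verts n \<times> path_verts 2) (cart_adj path_adj path_adj) ({0..<n} \<times> {0}) (a,Suc 0) = {(a,0)}"
proof (rule set_eqI)
  fix z show "z \<in> I_code (path_verts n \<times> path_verts 2) (cart_adj path_adj path_adj) ({0..<n} \<times> {0}) (a,Suc 0) \<longleftrightarrow> z \<in> {(a,0)}"
    using assms by (cases z) (auto simp: I_code_def nbhd_iff ladj_def)
qed

lemma upper:
  assumes "n \<ge> 1"
  shows "is_solid_LD (path_verts n \<times> path_verts 2) (cart_adj path_adj path_adj) ({0..<n} \<times> {0})"
proof -
  have V: "path_verts n \<times> path_verts 2 - {0..<n} \<times> {0} = {0..<n} \<times> {Suc 0}"
    by (auto simp: path_verts_def)
  show ?thesis unfolding is_solid_LD_def V using assms
    by (auto simp: I_up) (auto simp: path_verts_def)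
qed

theorem mainTheorem18:
  fixes n :: nat
  assumes "n \<ge> 1"
  shows "gamma_DLD (path_verts n \<times> path_verts 2) (cart_adj path_adj path_adj) = n"
  unfolding gamma_DLD_def
proof (rule Least_equality)
  show "\<exists>C. is_solid_LD (path_verts n \<times> path_verts 2) (cart_adj path_adj path_adj) C \<and> card C = n"
    using upper[OF assms] by (intro exI[of _ "{0..<n} \<times> {0}"]) (simp add: card_cartesian_product)
next
  fix y assume "\<exists>C. is_solid_LD (path_verts n \<times> path_verts 2) (cart_adj path_adj path_adj) C \<and> card C = y"
  then show "n \<le> y" using lower by blast
qed

end
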